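(* Let $T$ be a normal spanning tree of a connected graph $G$ with $n$ vertices and $m$ edges. Then $\mathcal{T}_G=\bigsqcup_{r\in\mathbb{I}^{m-n+1}}\mathcal{A}_T(r)$, where $\bigsqcup$ denotes disjoint union (each $\mathcal{A}_T(r)$ is nonempty and the sets $\mathcal{A}_T(r)$ are pairwise disjoint).
   Context: Graphs are finite, simple and undirected. $\mathbb{T}=\{z\in\mathbb{C}:|z|=1\}$, $\mathbb{I}=[0,2\pi)$. A $\mathbb{T}$-gain on $G$ is a map $\varphi$ from oriented edges to $\mathbb{T}$ with $\varphi(\overrightarrow{e_{ts}})=\varphi(\overrightarrow{e_{st}})^{-1}$; $\mathcal{T}_G$ is the set of all $\mathbb{T}$-gain graphs $(G,\varphi)$ on $G$. The gain of a directed cycle is the product of gains of its oriented edges. A rooted spanning tree $T$ with root $v_r$ induces the tree order ($v_x\le v_y$ iff $v_x$ is on the $T$-path from $v_r$ to $v_y$); $T$ is normal if adjacent vertices of $G$ are always comparable. The suitably oriented graph $\overrightarrow{G_T}$ orients each edge $e_{st}$ with $v_s\le v_t$ as $\overrightarrow{e_{st}}$ if $e_{st}\in E(T)$ and as $\overrightarrow{e_{ts}}$ otherwise; the $m-n+1$ fundamental cycles of $T$ become directed cycles $\overrightarrow{C_j(T)}$ in $\overrightarrow{G_T}$ (in a fixed order). For $r=(c_1,\dots,c_{m-n+1})\in\mathbb{I}^{m-n+1}$, $\mathcal{A}_T(r)=\{(G,\varphi)\in\mathcal{T}_G:\varphi(\overrightarrow{C_j(T)})=e^{ic_j},\ j=1,\dots,m-n+1\}$.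 *)

theory Defs
  imports Complex_Main
begin

definition simple_graph :: "'a set \<Rightarrow> 'a set set \<Rightarrow> bool" where
  "simple_graph V E \<longleftrightarrow> finite V \<and> (\<forall>e\<in>E. e \<subseteq> V \<and> card e = 2)"

definition is_path :: "'a set \<Rightarrow> 'a set set \<Rightarrow> 'a list \<Rightarrow> bool" where
  "is_path V F p \<longleftrightarrow> p \<noteq> [] \<and> distinct p \<and> set p \<subseteq> V \<and>
     (\<forall>i. Suc i < length p \<longrightarrow> {p ! i, p ! Suc i} \<in> F)"

definition is_cycle :: "'a set \<Rightarrow> 'a set set \<Rightarrow> 'a list \<Rightarrow> bool" where
  "is_cycle V F p \<longleftrightarrow> is_path V F p \<and> length p \<ge> 3 \<and> {last p, hd p} \<in> F"

definition connected_graph :: "'a set \<Rightarrow> 'a set set \<Rightarrow> bool" where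
  "connected_graph V F \<longleftrightarrow> V \<noteq> {} \<and>
     (\<forall>x\<in>V. \<forall>y\<in>V. \<exists>p. is_path V F p \<and> hd p = x \<and> last p = y)"

definition spanning_tree :: "'a set \<Rightarrow> 'a set set \<Rightarrow> 'a set set \<Rightarrow> bool" where
  "spanning_tree V E T \<longleftrightarrow> T \<subseteq> E \<and> connected_graph V T \<and> (\<nexists>p. is_cycle V T p)"

definition tree_path :: "'a set \<Rightarrow> 'a set set \<Rightarrow> 'a \<Rightarrow> 'a \<Rightarrow> 'a list" where
  "tree_path V T x y = (THE p. is_path V T p \<and> hd p = x \<and> last p = y)"

definition tree_le :: "'a set \<Rightarrow> 'a set set \<Rightarrow> 'a \<Rightarrow> 'a \<Rightarrow> 'a \<Rightarrow> bool" where
  "tree_le V T rt x y \<longleftrightarrow> x \<in> V \<and> y \<in> V \<and> x \<in> set (tree_path V T rt y)"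

definition normal_spanning_tree :: "'a set \<Rightarrow> 'a set set \<Rightarrow> 'a set set \<Rightarrow> 'a \<Rightarrow> bool" where
  "normal_spanning_tree V E T rt \<longleftrightarrow> spanning_tree V E T \<and> rt \<in> V \<and>
     (\<forall>x y. {x, y} \<in> E \<longrightarrow> tree_le V T rt x y \<or> tree_le V T rt y x)"

text \<open>The gain function is
  normalised to the value 1 on pairs that are not oriented edges, so that each
  gain corresponds to exactly one function.\<close>

definition gain_graphs :: "'a set \<Rightarrow> 'a set set \<Rightarrow> ('a \<Rightarrow> 'a \<Rightarrow> complex) set" where
  "gain_graphs V E = {\<phi>. (\<forall>u v. {u, v} \<in> E \<longrightarrow> cmod (\<phi> u v) = 1 \<and> \<phi> v u = inverse (\<phi> u v))
                       \<and> (\<forall>u v. {u, v} \<notin> E \<longrightarrow> \<phi> u v = 1)}"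

definition suitable_orientation :: "'a set \<Rightarrow> 'a set set \<Rightarrow> 'a set set \<Rightarrow> 'a \<Rightarrow> ('a \<times> 'a) set" where
  "suitable_orientation V E T rt =
     {(s, t). {s, t} \<in> T \<and> tree_le V T rt s t} \<union> {(t, s). {s, t} \<in> E - T \<and> tree_le V T rt s t}"

definition walk_gain :: "('a \<Rightarrow> 'a \<Rightarrow> complex) \<Rightarrow> 'a list \<Rightarrow> complex" where
  "walk_gain \<phi> p = (\<Prod>i<length p. \<phi> (p ! i) (p ! ((Suc i) mod length p)))"

text \<open>The fundamental cycle of a non-tree edge e = {s,t} with s \<le> t, as a directed
  cycle of \<open>G_T\<close>: the tree path s \<rightarrow> \<dots> \<rightarrow> t followed by the arc t \<rightarrow> s.\<close>

definition fundamental_cycle :: "'a set \<Rightarrow> 'a set set \<Rightarrow> 'a \<Rightarrow> 'a set \<Rightarrow> 'a list" where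
  "fundamental_cycle V T rt e =
     (let (s, t) = (SOME (s, t). e = {s, t} \<and> tree_le V T rt s t) in tree_path V T s t)"

text \<open>\<open>\<A>_T(r)\<close>, where the fundamental cycles are listed in the fixed order cs.\<close>

definition A_T :: "'a set \<Rightarrow> 'a set set \<Rightarrow> 'a set set \<Rightarrow> 'a \<Rightarrow> 'a set list \<Rightarrow> real list
                    \<Rightarrow> ('a \<Rightarrow> 'a \<Rightarrow> complex) set" where
  "A_T V E T rt cs r = {\<phi> \<in> gain_graphs V E.
     \<forall>j < length cs. walk_gain \<phi> (fundamental_cycle V T rt (cs ! j)) = exp (\<i> * of_real (r ! j))}"

definition I_pow :: "nat \<Rightarrow> real list set" where
  "I_pow k = {r. length r = k \<and> (\<forall>x\<in>set r. 0 \<le> x \<and> x < 2 * pi)}"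

end

theory Submission imports Defs "HOL-Analysis.Analysis" begin

lemma is_path_single: "is_path V F [x] \<longleftrightarrow> x \<in> V"
  by (auto simp: is_path_def)

lemma is_path_Cons:
  assumes "p \<noteq> []"
  shows "is_path V F (x # p) \<longleftrightarrow> x \<in> V \<and> x \<notin> set p \<and> {x, hd p} \<in> F \<and> is_path V F p"
proof
  assume h: "is_path V F (x # p)"
  have "{x, hd p} \<in> F" using h assms unfolding is_path_def
    by (metis Suc_less_eq hd_conv_nth length_Cons length_greater_0_conv nth_Cons_0 nth_Cons_Suc)
  moreover have "is_path V F p" using h assms unfolding is_path_def
    by (metis Suc_less_eq distinct.simps(2) length_Cons list.set_intros(2) nth_Cons_Suc subset_code(1))
  ultimately show "x \<in> V \<and> x \<notin> set p \<and> {x, hd p} \<in> F \<and> is_path V F p"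
    using h by (auto simp: is_path_def)
next
  assume h: "x \<in> V \<and> x \<notin> set p \<and> {x, hd p} \<in> F \<and> is_path V F p"
  show "is_path V F (x # p)" unfolding is_path_def
  proof (intro conjI allI impI)
    fix i assume i: "Suc i < length (x # p)"
    show "{(x # p) ! i, (x # p) ! Suc i} \<in> F"
    proof (cases i)
      case 0 then show ?thesis using h assms by (simp add: hd_conv_nth)
    next
      case (Suc j) then show ?thesis using h i by (auto simp: is_path_def)
    qed
  qed (use h in \<open>auto simp: is_path_def\<close>)
qed

lemma is_path_appendD1: "is_path V F (xs @ ys) \<Longrightarrow> xs \<noteq> [] \<Longrightarrow> is_path V F xs"
  unfolding is_path_def
  by (smt (verit, ccfv_threshold) Suc_lessD Un_subset_iff distinct_append length_append nth_append set_append trans_less_add1)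

lemma is_path_appendD2: "is_path V F (xs @ ys) \<Longrightarrow> ys \<noteq> [] \<Longrightarrow> is_path V F ys"
proof (induction xs)
  case (Cons a xs)
  then show ?case by (cases "xs @ ys") (auto simp: is_path_Cons)
qed simp

lemma is_path_snoc:
  assumes "is_path V F p" "b \<in> V" "b \<notin> set p" "{last p, b} \<in> F"
  shows "is_path V F (p @ [b])"
  using assms
proof (induction p)
  case (Cons a p)
  show ?case
  proof (cases "p = []")
    case True then show ?thesis using Cons by (auto simp: is_path_Cons is_path_single)
  next
    case False then show ?thesis using Cons by (auto simp: is_path_Cons)
  qed
qed (simp add: is_path_def)

lemma is_path_edge:
  assumes "is_path V F (xs @ y # ys)" "xs \<noteq> []"
  shows "{last xs, y} \<in> F"
  using assms
proof (induction xs)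
  case (Cons a xs)
  show ?case
  proof (cases "xs = []")
    case True then show ?thesis using Cons by (auto simp: is_path_Cons)
  next
    case False then show ?thesis using Cons by (auto simp: is_path_Cons)
  qed
qed simp

lemma distinct_hd_last: "distinct p \<Longrightarrow> p \<noteq> [] \<Longrightarrow> hd p = last p \<Longrightarrow> p = [hd p]"
  by (cases p) (auto split: if_splits)

lemma path_unique:
  assumes nocyc: "\<nexists>c. is_cycle V F c"
  shows "is_path V F q \<Longrightarrow> is_path V F p \<Longrightarrow> hd p = hd q \<Longrightarrow> last p = last q \<Longrightarrow> p = q"
proof (induction q arbitrary: p)
  case Nil then show ?case by (simp add: is_path_def)
next
  case (Cons x q')
  have pne: "p \<noteq> []" using Cons.prems by (simp add: is_path_def)
  show ?case
  proof (cases "q' = []")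
    case True
    then have "hd p = last p" using Cons.prems by simp
    moreover have "distinct p" using Cons.prems by (simp add: is_path_def)
    ultimately have "p = [hd p]" using distinct_hd_last pne by blast
    then show ?thesis using Cons.prems True by (metis list.sel(1))
  next
    case False
    then obtain b q'' where q': "q' = b # q''" by (cases q') auto
    obtain p' where p: "p = x # p'" using pne Cons.prems by (cases p) auto
    have qpath: "x \<in> V" "x \<notin> set q'" "{x, b} \<in> F" "is_path V F q'"
      using Cons.prems(1) False q' by (auto simp: is_path_Cons)
    have p'ne: "p' \<noteq> []"
    proof
      assume "p' = []"
      then have "last q' = x" using Cons.prems p False by simp
      then show False using qpath False by (metis last_in_set)
    qed
    have ppath: "x \<notin> set p'" "{x, hd p'} \<in> F" "is_path V F p'"
      using Cons.prems(2) p'ne p by (auto simp: is_path_Cons)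
    show ?thesis
    proof (cases "hd p' = b")
      case True
      then have "p' = q'" using Cons.IH[OF qpath(4) ppath(3)] q' Cons.prems p p'ne False by simp
      then show ?thesis using p by simp
    next
      case hne: False
      show ?thesis
      proof (cases "b \<in> set p")
        case False
        have "is_path V F (b # p)"
          using Cons.prems(2) False pne qpath q' p
          by (subst is_path_Cons) (auto simp: is_path_Cons insert_commute is_path_def)
        then have "b # p = q'" using Cons.IH[of "b # p"] qpath q' Cons.prems p False pne by simp
        then show ?thesis using qpath(2) p by auto
      next
        case True
        have "b \<noteq> x" using qpath q' by auto
        then have "b \<in> set p'" using True p by simp
        then obtain u w where uw: "p' = u @ b # w" by (meson split_list)
        have une: "u \<noteq> []" using uw hne by auto
        have "is_path V F (x # u @ [b])"
          using Cons.prems(2) p uw is_path_appendD1[of V F "x # u @ [b]" w] by simp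
        then have "is_cycle V F (x # u @ [b])"
          using une qpath(3) by (auto simp: is_cycle_def insert_commute Suc_le_eq)
        then show ?thesis using nocyc by blast
      qed
    qed
  qed
qed

locale stree =
  fixes V :: "'a set" and T :: "'a set set" and rt :: 'a
  assumes finV: "finite V" and edges: "\<And>e. e \<in> T \<Longrightarrow> e \<subseteq> V \<and> card e = 2"
    and conn: "connected_graph V T" and nocyc: "\<nexists>c. is_cycle V T c" and rtV: "rt \<in> V"
begin

lemma tp: assumes "x \<in> V" "y \<in> V"
  shows "is_path V T (tree_path V T x y) \<and> hd (tree_path V T x y) = x \<and> last (tree_path V T x y) = y"
proof -
  obtain p where p: "is_path V T p" "hd p = x" "last p = y" using conn assms unfolding connected_graph_def by blast
  show ?thesis unfolding tree_path_def
    by (rule theI[of _ p]) (use p path_unique[OF nocyc] in auto)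
qed

lemma tp_eq: assumes "is_path V T p" shows "tree_path V T (hd p) (last p) = p"
proof -
  have ne: "p \<noteq> []" and "set p \<subseteq> V" using assms by (auto simp: is_path_def)
  then have "hd p \<in> V" "last p \<in> V" by auto
  from tp[OF this] show ?thesis using path_unique[OF nocyc] assms by metis
qed

definition P where "P v = tree_path V T rt v"
definition parent where "parent v = last (butlast (P v))"

lemma parent_props:
  assumes "v \<in> V" "v \<noteq> rt"
  shows "P v = P (parent v) @ [v] \<and> parent v \<in> V \<and> {parent v, v} \<in> T"
proof -
  define p where "p = P v"
  have p: "is_path V T p" "hd p = rt" "last p = v" using tp[OF rtV assms(1)] by (auto simp: p_def P_def)
  have ne: "p \<noteq> []" using p by (auto simp: is_path_def)
  have bne: "butlast p \<noteq> []"
  proof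
    assume "butlast p = []"
    then have "p = [v]" using ne p by (metis append_butlast_last_id append_Nil)
    then show False using p assms by simp
  qed
  have split: "p = butlast p @ [v]" using ne p(3) append_butlast_last_id by metis
  have bp: "is_path V T (butlast p)" using is_path_appendD1[of V T "butlast p" "[v]"] split p bne by simp
  have hb: "hd (butlast p) = rt" using p bne split by (metis hd_append2)
  have "P (parent v) = butlast p" using tp_eq[OF bp] hb by (simp add: parent_def p_def P_def)
  moreover have "parent v \<in> V" using bp bne by (auto simp: is_path_def parent_def p_def)
  moreover have "{parent v, v} \<in> T" using is_path_edge[of V T "butlast p" v "[]"] split p bne
    by (simp add: parent_def p_def)
  ultimately show ?thesis using split by (simp add: p_def)
qed

lemma card_T: "card T = card V - 1"
proof -
  define f where "f v = {parent v, v}" for v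
  have inj: "inj_on f (V - {rt})"
  proof (rule inj_onI)
    fix v w assume v: "v \<in> V - {rt}" and w: "w \<in> V - {rt}" and e: "f v = f w"
    show "v = w"
    proof (rule ccontr)
      assume "v \<noteq> w"
      then have "v = parent w" "w = parent v" using e by (auto simp: f_def doubleton_eq_iff)
      then show False using parent_props[of v] parent_props[of w] v w
        by (metis DiffD1 DiffD2 insertI1 length_append_singleton lessI less_not_sym)
    qed
  qed
  have img: "f ` (V - {rt}) = T"
  proof
    show "f ` (V - {rt}) \<subseteq> T" using parent_props by (auto simp: f_def)
  next
    show "T \<subseteq> f ` (V - {rt})"
    proof
      fix e assume eT: "e \<in> T"
      then obtain a b where ab: "e = {a, b}" "a \<noteq> b" using edges by (meson card_2_iff)
      have abV: "a \<in> V" "b \<in> V" using edges[OF eT] ab by auto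
      define pa where "pa = P a"
      have pa: "is_path V T pa" "hd pa = rt" "last pa = a" using tp[OF rtV abV(1)] by (auto simp: pa_def P_def)
      have pane: "pa \<noteq> []" using pa by (auto simp: is_path_def)
      show "e \<in> f ` (V - {rt})"
      proof (cases "b \<in> set pa")
        case False
        have "is_path V T (pa @ [b])" using is_path_snoc[OF pa(1) abV(2) False] pa eT ab by simp
        from tp_eq[OF this] have "P b = pa @ [b]" using pa pane by (simp add: P_def)
        moreover have "b \<noteq> rt" using False pa pane by (metis hd_in_set)
        ultimately have "parent b = a" using pa by (simp add: parent_def)
        then show ?thesis using \<open>b \<noteq> rt\<close> abV ab by (auto simp: f_def image_iff intro!: bexI[of _ b])
      next
        case True
        then obtain xs ys where xy: "pa = xs @ b # ys" by (meson split_list)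
        have yne: "ys \<noteq> []" using xy pa ab by auto
        have pb: "is_path V T (xs @ [b])" using is_path_appendD1[of V T "xs @ [b]" ys] xy pa by simp
        have "hd (xs @ [b]) = rt" using pa xy by (cases xs) auto
        then have Pb: "P b = xs @ [b]" using tp_eq[OF pb] by (simp add: P_def)
        show ?thesis
        proof (cases "ys = [a]")
          case True
          then have Pa: "P a = P b @ [a]" using xy Pb pa_def by simp
          have "a \<noteq> rt"
          proof
            assume "a = rt"
            then have "hd pa = last pa" using pa by simp
            moreover have "distinct pa" using pa by (simp add: is_path_def)
            ultimately have "pa = [hd pa]" using distinct_hd_last pane by blast
            then show False using xy True by (cases xs) auto
          qed
          then have "parent a = b" using Pa Pb by (simp add: parent_def butlast_append)
          then show ?thesis using \<open>a \<noteq> rt\<close> abV ab by (auto simp: f_def image_iff intro!: bexI[of _ a])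
        next
          case False
          have lys: "last ys = a" using xy pa yne by simp
          have "length ys \<ge> 2" using False yne lys by (cases ys) (auto split: if_splits simp: Suc_le_eq)
          have cp: "is_path V T (b # ys)" using is_path_appendD2[of V T xs "b # ys"] xy pa by simp
          have "is_cycle V T (b # ys)" using cp \<open>length ys \<ge> 2\<close> lys eT ab yne
            by (auto simp: is_cycle_def insert_commute)
          then show ?thesis using nocyc by blast
        qed
      qed
    qed
  qed
  have "card T = card (V - {rt})" using card_image[OF inj] img by simp
  then show ?thesis using rtV finV by simp
qed

end


lemma exp_Arg2pi: "cmod z = 1 \<Longrightarrow> exp (\<i> * of_real (Arg2pi z)) = z"
  using Arg2pi[of z] by (simp add: is_Arg_def)

lemma exp_inj_2pi:
  assumes "exp (\<i> * of_real a) = exp (\<i> * of_real b)" "0 \<le> a" "a < 2*pi" "0 \<le> b" "b < 2*pi"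
  shows "a = b"
proof -
  have one: "(0::real) < 1" by simp
  have ea: "of_real 1 * exp (\<i> * of_real a) = exp (\<i> * of_real a)" by simp
  have eb: "of_real 1 * exp (\<i> * of_real b) = exp (\<i> * of_real a)" by (simp only: assms(1) of_real_1 mult_1)
  have "a = Arg2pi (exp (\<i> * of_real a))" using Arg2pi_unique[OF ea one assms(2) assms(3)] by (rule sym)
  also have "\<dots> = b" using Arg2pi_unique[OF eb one assms(4) assms(5)] .
  finally show ?thesis .
qed

lemma gain_norm: assumes "\<phi> \<in> gain_graphs V E" shows "cmod (\<phi> u v) = 1"
proof -
  have h1: "\<forall>u v. {u, v} \<in> E \<longrightarrow> cmod (\<phi> u v) = 1" and h2: "\<forall>u v. {u, v} \<notin> E \<longrightarrow> \<phi> u v = 1"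
    using assms unfolding gain_graphs_def by blast+
  show ?thesis
  proof (cases "{u, v} \<in> E")
    case True then show ?thesis using h1 by blast
  next
    case False then have "\<phi> u v = 1" using h2 by blast
    then show ?thesis by simp
  qed
qed

lemma walk_gain_norm: "\<phi> \<in> gain_graphs V E \<Longrightarrow> cmod (walk_gain \<phi> p) = 1"
  unfolding walk_gain_def by (simp add: prod_norm[symmetric] gain_norm)

theorem theorem3p3:
  fixes V :: "'a set" and E T :: "'a set set" and rt :: 'a and cs :: "'a set list"
  assumes "simple_graph V E"
    and "connected_graph V E"
    and "normal_spanning_tree V E T rt"
    and "distinct cs" and "set cs = E - T"
  shows "gain_graphs V E = (\<Union>r \<in> I_pow (card E + 1 - card V). A_T V E T rt cs r)
    \<and> (\<forall>r \<in> I_pow (card E + 1 - card V). A_T V E T rt cs r \<noteq> {})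
    \<and> (\<forall>r \<in> I_pow (card E + 1 - card V). \<forall>r' \<in> I_pow (card E + 1 - card V).
          r \<noteq> r' \<longrightarrow> A_T V E T rt cs r \<inter> A_T V E T rt cs r' = {})"
proof -
  define k where "k = card E + 1 - card V"
  have finV: "finite V" and Eprop: "\<And>e. e \<in> E \<Longrightarrow> e \<subseteq> V \<and> card e = 2"
    using assms(1) by (auto simp: simple_graph_def)
  have TE: "T \<subseteq> E" and connT: "connected_graph V T" and nocyc: "\<nexists>c. is_cycle V T c"
    and rtV: "rt \<in> V" and comp: "\<And>x y. {x, y} \<in> E \<Longrightarrow> tree_le V T rt x y \<or> tree_le V T rt y x"
    using assms(3) by (auto simp: normal_spanning_tree_def spanning_tree_def)
  have "stree V T rt"
  proof
    fix e assume "e \<in> T" then show "e \<subseteq> V \<and> card e = 2" using Eprop TE by blast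
  qed (use finV connT nocyc rtV in auto)
  then interpret stree V T rt .
  have "E \<subseteq> Pow V" using Eprop by blast
  then have finE: "finite E" using finV finite_subset by blast
  have lencs: "length cs = k"
  proof -
    have "length cs = card (E - T)" using distinct_card[OF assms(4)] assms(5) by simp
    also have "\<dots> = card E - card T" using card_Diff_subset[OF finite_subset[OF TE finE] TE] .
    moreover have "card V > 0" using rtV finV card_gt_0_iff by blast
    moreover have "card T \<le> card E" using card_mono[OF finE TE] .
    ultimately show ?thesis using card_T unfolding k_def by linarith
  qed
  have part1: "gain_graphs V E = (\<Union>r \<in> I_pow k. A_T V E T rt cs r)"
  proof
    show "gain_graphs V E \<subseteq> (\<Union>r \<in> I_pow k. A_T V E T rt cs r)"
    proof
      fix \<phi> assume ph: "\<phi> \<in> gain_graphs V E"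
      define r where "r = map (\<lambda>e. Arg2pi (walk_gain \<phi> (fundamental_cycle V T rt e))) cs"
      have "r \<in> I_pow k" using lencs Arg2pi by (auto simp: r_def I_pow_def)
      moreover have "\<phi> \<in> A_T V E T rt cs r"
        using ph exp_Arg2pi[OF walk_gain_norm[OF ph]] by (auto simp: A_T_def r_def)
      ultimately show "\<phi> \<in> (\<Union>r \<in> I_pow k. A_T V E T rt cs r)" by blast
    qed
  qed (auto simp: A_T_def)
  have part3: "\<forall>r \<in> I_pow k. \<forall>r' \<in> I_pow k. r \<noteq> r' \<longrightarrow> A_T V E T rt cs r \<inter> A_T V E T rt cs r' = {}"
  proof (intro ballI impI)
    fix r r' assume r: "r \<in> I_pow k" and r': "r' \<in> I_pow k" and ne: "r \<noteq> r'"
    show "A_T V E T rt cs r \<inter> A_T V E T rt cs r' = {}"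
    proof (rule ccontr)
      assume "A_T V E T rt cs r \<inter> A_T V E T rt cs r' \<noteq> {}"
      then obtain \<phi> where "\<phi> \<in> A_T V E T rt cs r" "\<phi> \<in> A_T V E T rt cs r'" by blast
      then have eq: "\<And>j. j < k \<Longrightarrow> exp (\<i> * of_real (r ! j)) = exp (\<i> * of_real (r' ! j))"
        using lencs by (auto simp: A_T_def)
      have "r = r'"
      proof (rule nth_equalityI)
        show "length r = length r'" using r r' by (simp add: I_pow_def)
        fix j assume "j < length r"
        then have j: "j < k" using r by (simp add: I_pow_def)
        show "r ! j = r' ! j"
          by (rule exp_inj_2pi[OF eq[OF j]]) (use r r' j in \<open>auto simp: I_pow_def\<close>)
      qed
      then show False using ne by simp
    qed
  qed
  define sel where "sel e = (SOME (s, t). e = {s, t} \<and> tree_le V T rt s t)" for e :: "'a set"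
  have sel0: "e = {fst (sel e), snd (sel e)} \<and> tree_le V T rt (fst (sel e)) (snd (sel e))
      \<and> fst (sel e) \<noteq> snd (sel e)" if eE: "e \<in> E" for e
  proof -
    obtain a b where ab: "e = {a, b}" using Eprop[OF eE] by (meson card_2_iff)
    have "\<exists>x. (\<lambda>(s, t). e = {s, t} \<and> tree_le V T rt s t) x"
      using comp[of a b] eE ab by (auto simp: insert_commute)
    from someI_ex[OF this] have "(\<lambda>(s, t). e = {s, t} \<and> tree_le V T rt s t) (sel e)"
      unfolding sel_def .
    then have "e = {fst (sel e), snd (sel e)} \<and> tree_le V T rt (fst (sel e)) (snd (sel e))"
      by (simp add: case_prod_beta)
    moreover have "card e = 2" using Eprop[OF eE] by simp
    ultimately show ?thesis by (metis card_2_iff doubleton_eq_iff)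
  qed
  have sel: "\<exists>s t. sel e = (s, t) \<and> e = {s, t} \<and> tree_le V T rt s t \<and> s \<noteq> t" if eE: "e \<in> E" for e
    using sel0[OF eE] by (metis prod.collapse)
  have fc: "fundamental_cycle V T rt e = tree_path V T (fst (sel e)) (snd (sel e))" for e
    unfolding fundamental_cycle_def sel_def by (simp add: case_prod_beta Let_def)
  have part2: "\<forall>r \<in> I_pow k. A_T V E T rt cs r \<noteq> {}"
  proof
    fix r assume r: "r \<in> I_pow k"
    define idx where "idx e = (SOME j. j < length cs \<and> cs ! j = e)" for e
    have idx: "idx (cs ! j) = j" if "j < length cs" for j
      unfolding idx_def by (rule some_equality) (use that assms(4) nth_eq_iff_index_eq in auto)
    define z where "z e = exp (\<i> * of_real (r ! idx e))" for e
    have zn: "cmod (z e) = 1" for e by (simp add: z_def)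
    define \<phi> where "\<phi> u v = (if {u, v} \<in> E - T then (if sel {u, v} = (v, u) then z {u, v} else inverse (z {u, v})) else 1)" for u v
    have gg: "\<phi> \<in> gain_graphs V E"
      unfolding gain_graphs_def
    proof (intro CollectI conjI allI impI)
      fix u v assume uv: "{u, v} \<in> E"
      show "cmod (\<phi> u v) = 1" using zn by (simp add: \<phi>_def norm_inverse)
      show "\<phi> v u = inverse (\<phi> u v)"
      proof (cases "{u, v} \<in> T")
        case True then show ?thesis by (simp add: \<phi>_def insert_commute)
      next
        case False
        obtain s t where st: "sel {u, v} = (s, t)" "{u, v} = {s, t}" "s \<noteq> t" using sel[OF uv] by blast
        have inE: "{u, v} \<in> E - T" using uv False by blast
        have e1: "{v, u} = {u, v}" by blast
        have "(u = s \<and> v = t) \<or> (u = t \<and> v = s)" using st(2) by (simp add: doubleton_eq_iff)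
        then show ?thesis
        proof
          assume h: "u = s \<and> v = t"
          then have "sel {u, v} \<noteq> (v, u)" "sel {v, u} = (u, v)" using st e1 by auto
          then show ?thesis using inE e1 by (simp add: \<phi>_def)
        next
          assume h: "u = t \<and> v = s"
          then have "sel {u, v} = (v, u)" "sel {v, u} \<noteq> (u, v)" using st e1 by auto
          then show ?thesis using inE e1 by (simp add: \<phi>_def)
        qed
      qed
    next
      fix u v assume "{u, v} \<notin> E" then show "\<phi> u v = 1" by (simp add: \<phi>_def)
    qed
    have "\<phi> \<in> A_T V E T rt cs r"
      unfolding A_T_def
    proof (intro CollectI conjI allI impI gg)
      fix j assume j: "j < length cs"
      define e where "e = cs ! j"
      have eET: "e \<in> E - T" using j assms(5) e_def nth_mem by blast
      obtain s t where stdef: "sel e = (s, t)" and st: "e = {s, t}" "tree_le V T rt s t" "s \<noteq> t"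
        using sel[of e] eET by blast
      have ets: "{t, s} = e" using st(1) by auto
      have stV: "s \<in> V" "t \<in> V" using st by (auto simp: tree_le_def)
      define p where "p = tree_path V T s t"
      have p: "is_path V T p" "hd p = s" "last p = t" using tp[OF stV] by (auto simp: p_def)
      define n where "n = length p"
      have n2: "n \<ge> 2"
      proof (rule ccontr)
        assume "\<not> n \<ge> 2"
        moreover have "p \<noteq> []" using p by (auto simp: is_path_def)
        ultimately obtain a where "p = [a]" unfolding n_def by (cases p) (auto simp: Suc_le_eq)
        then show False using p st by simp
      qed
      have inner: "\<phi> (p ! i) (p ! (Suc i mod n)) = 1" if "i < n - 1" for i
      proof -
        have "Suc i mod n = Suc i" using that n2 by simp
        moreover have "{p ! i, p ! Suc i} \<in> T" using p(1) that n2 by (auto simp: is_path_def n_def)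
        ultimately show ?thesis by (simp add: \<phi>_def)
      qed
      have lastp: "p ! (n - 1) = t" "p ! 0 = s" "Suc (n - 1) mod n = 0"
        using p n2 by (auto simp: n_def last_conv_nth hd_conv_nth is_path_def)
      have sel_ts: "sel {t, s} = (s, t)" using stdef ets by simp
      have "\<phi> t s = z e" using eET sel_ts ets by (simp add: \<phi>_def)
      have "walk_gain \<phi> p = (\<Prod>i\<in>insert (n - 1) {..<n - 1}. \<phi> (p ! i) (p ! (Suc i mod n)))"
        unfolding walk_gain_def n_def[symmetric]
        using n2 by (metis Suc_diff_1 lessThan_Suc less_le_trans pos2)
      also have "\<dots> = \<phi> t s" using inner lastp by simp
      also have "\<dots> = exp (\<i> * of_real (r ! j))" using \<open>\<phi> t s = z e\<close> idx[OF j] by (simp add: z_def e_def)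
      finally show "walk_gain \<phi> (fundamental_cycle V T rt (cs ! j)) = exp (\<i> * of_real (r ! j))"
        using fc[of e] stdef by (simp add: p_def e_def)
    qed
    then show "A_T V E T rt cs r \<noteq> {}" by blast
  qed
  have kk: "card E + 1 - card V = k" by (simp add: k_def)
  show ?thesis unfolding kk by (intro conjI part1 part2 part3)
qed

end
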